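(* If $\clubsuit$ holds then there is a family $\{S_\beta:\beta<\omega_2\}$ of stationary subsets of $\omega_1$ which is almost disjoint (i.e. $S_\beta\cap S_\gamma$ is countable for $\beta\neq\gamma$); hence $\mathrm{NS}_{\omega_1}$ is not saturated. Consequently, it is consistent that Galvin's property fails and $\mathrm{NS}_{\omega_1}$ is not saturated.
   Context: $\clubsuit$ (tiltan) at $\aleph_1$: there is a sequence $\langle T_\alpha:\alpha\in\lim(\omega_1)\rangle$ such that each $T_\alpha$ is a cofinal subset of $\alpha$, and for every unbounded $A\subseteq\omega_1$ the set $\{\alpha: T_\alpha\subseteq A\}$ is stationary. An ideal $\mathcal{I}$ over $\omega_1$ is saturated iff in every collection $\{S_\alpha:\alpha<\omega_2\}$ of $\mathcal{I}$-positive sets there are distinct $\alpha,\beta$ with $S_\alpha\cap S_\beta\notin\mathcal{I}$; $\mathrm{NS}_{\omega_1}$ is the nonstationary ideal on $\omega_1$. Galvin's property (at $\aleph_1$): every collection $\{C_\alpha:\alpha<\omega_2\}$ of club subsets of $\omega_1$ has a subcollection $\{C_{\alpha_\beta}:\beta<\omega_1\}$ (distinct indices) whose intersection is a club of $\omega_1$. *)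

theory Defs
  imports Main "HOL-Library.Countable_Set"
begin

text \<open>omega_1 is represented by a well-ordered type 'a that is uncountable
  and all of whose proper initial segments are countable.  omega_2 is
  represented by a well-ordered type 'b that does not inject into 'a but
  all of whose proper initial segments inject into 'a.\<close>

definition is_omega1_type :: "'a::wellorder itself \<Rightarrow> bool" where
  "is_omega1_type _ \<longleftrightarrow> \<not> countable (UNIV :: 'a set) \<and> (\<forall>x::'a. countable {..<x})"

definition is_omega2_type :: "'b::wellorder itself \<Rightarrow> 'a itself \<Rightarrow> bool" where
  "is_omega2_type _ _ \<longleftrightarrow>
     \<not> (\<exists>f :: 'b \<Rightarrow> 'a. inj f) \<and> (\<forall>x::'b. \<exists>f :: 'b \<Rightarrow> 'a. inj_on f {..<x})"

definition limit_pt :: "'a::wellorder \<Rightarrow> bool" where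
  "limit_pt \<alpha> \<longleftrightarrow> (\<exists>\<beta>. \<beta> < \<alpha>) \<and> (\<forall>\<beta><\<alpha>. \<exists>\<gamma>. \<beta> < \<gamma> \<and> \<gamma> < \<alpha>)"

definition cofinal_in :: "'a::wellorder set \<Rightarrow> 'a \<Rightarrow> bool" where
  "cofinal_in T \<alpha> \<longleftrightarrow> T \<subseteq> {..<\<alpha>} \<and> (\<forall>\<beta><\<alpha>. \<exists>t\<in>T. \<beta> \<le> t)"

definition unbounded :: "'a::wellorder set \<Rightarrow> bool" where
  "unbounded A \<longleftrightarrow> (\<forall>\<beta>. \<exists>a\<in>A. \<beta> \<le> a)"

definition closed_set :: "'a::wellorder set \<Rightarrow> bool" where
  "closed_set C \<longleftrightarrow> (\<forall>\<alpha>. limit_pt \<alpha> \<and> (\<forall>\<beta><\<alpha>. \<exists>c\<in>C. \<beta> \<le> c \<and> c < \<alpha>) \<longrightarrow> \<alpha> \<in> C)"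

definition club :: "'a::wellorder set \<Rightarrow> bool" where
  "club C \<longleftrightarrow> closed_set C \<and> unbounded C"

definition stationary :: "'a::wellorder set \<Rightarrow> bool" where
  "stationary S \<longleftrightarrow> (\<forall>C. club C \<longrightarrow> S \<inter> C \<noteq> {})"

definition NS :: "'a::wellorder set set" where
  "NS = {A. \<not> stationary A}"

definition clubsuit :: "'a::wellorder itself \<Rightarrow> bool" where
  "clubsuit _ \<longleftrightarrow> (\<exists>T :: 'a \<Rightarrow> 'a set.
      (\<forall>\<alpha>. limit_pt \<alpha> \<longrightarrow> cofinal_in (T \<alpha>) \<alpha>) \<and>
      (\<forall>A. unbounded A \<longrightarrow> stationary {\<alpha>. limit_pt \<alpha> \<and> T \<alpha> \<subseteq> A}))"

definition saturated :: "'b itself \<Rightarrow> 'a set set \<Rightarrow> bool" where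
  "saturated _ I \<longleftrightarrow> (\<forall>S :: 'b \<Rightarrow> 'a set. (\<forall>\<alpha>. S \<alpha> \<notin> I) \<longrightarrow>
      (\<exists>\<alpha> \<beta>. \<alpha> \<noteq> \<beta> \<and> S \<alpha> \<inter> S \<beta> \<notin> I))"

end

theory Submission
  imports Defs
begin

lemma ctbl_bounded:
  assumes u: "\<not> countable (UNIV::'a::wellorder set)" and c: "\<forall>x::'a. countable {..<x}"
    and X: "countable (X::'a set)"
  shows "\<exists>\<delta>. \<forall>x\<in>X. x < \<delta>"
proof (rule ccontr)
  assume "\<not> ?thesis"
  then have "UNIV \<subseteq> (\<Union>x\<in>X. insert x {..<x})"
  proof (intro subsetI)
    fix z :: 'a assume "\<not> (\<exists>\<delta>. \<forall>x\<in>X. x < \<delta>)"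
    then obtain y where "y \<in> X" "z \<le> y" by (auto simp: not_less)
    then show "z \<in> (\<Union>x\<in>X. insert x {..<x})" by (auto simp: le_less)
  qed
  moreover have "countable (\<Union>x\<in>X. insert x {..<x})" using X c by auto
  ultimately show False using u countable_subset by blast
qed

lemma uncountable_unbounded:
  assumes c: "\<forall>x::'a::wellorder. countable {..<x}" and A: "\<not> countable (A::'a set)"
  shows "unbounded A"
  unfolding unbounded_def
proof
  fix \<beta> :: 'a
  show "\<exists>a\<in>A. \<beta> \<le> a"
  proof (rule ccontr)
    assume "\<not> ?thesis"
    then have "A \<subseteq> {..<\<beta>}" by (auto simp: not_le)
    then show False using c A countable_subset by blast
  qed
qed

lemma ctbl_nonstat:
  assumes u: "\<not> countable (UNIV::'a::wellorder set)" and c: "\<forall>x::'a. countable {..<x}"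
    and X: "countable (X::'a set)"
  shows "\<not> stationary X"
proof -
  obtain \<delta> where d: "\<forall>x\<in>X. x < \<delta>" using ctbl_bounded[OF u c X] by blast
  have cl: "closed_set {\<delta><..}"
    unfolding closed_set_def
  proof (intro allI impI)
    fix \<alpha> :: 'a assume h: "limit_pt \<alpha> \<and> (\<forall>\<beta><\<alpha>. \<exists>c\<in>{\<delta><..}. \<beta> \<le> c \<and> c < \<alpha>)"
    then obtain \<beta> where "\<beta> < \<alpha>" unfolding limit_pt_def by blast
    with h obtain c where "c \<in> {\<delta><..}" "c < \<alpha>" by blast
    then show "\<alpha> \<in> {\<delta><..}" by auto
  qed
  have "\<not> countable {\<delta><..}"
  proof
    assume "countable {\<delta><..}"
    moreover have "UNIV = {\<delta><..} \<union> insert \<delta> {..<\<delta>}" by auto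
    ultimately show False using u c by (metis countable_Un countable_insert)
  qed
  then have "unbounded {\<delta><..}" using uncountable_unbounded[OF c] by blast
  with cl have "club {\<delta><..}" unfolding club_def by blast
  moreover have "X \<inter> {\<delta><..} = {}" using d by fastforce
  ultimately show ?thesis unfolding stationary_def by blast
qed

theorem mainTheorem8:
  assumes "is_omega1_type TYPE('a::wellorder)"
    and "is_omega2_type TYPE('b::wellorder) TYPE('a)"
    and "clubsuit TYPE('a)"
  shows "(\<exists>S :: 'b \<Rightarrow> 'a set. (\<forall>\<beta>. stationary (S \<beta>)) \<and>
            (\<forall>\<beta> \<gamma>. \<beta> \<noteq> \<gamma> \<longrightarrow> countable (S \<beta> \<inter> S \<gamma>)))
         \<and> \<not> saturated TYPE('b) (NS :: 'a set set)"
proof -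
  have u: "\<not> countable (UNIV::'a set)" and c: "\<forall>x::'a. countable {..<x}"
    using assms(1) unfolding is_omega1_type_def by auto
  have inj2: "\<forall>x::'b. \<exists>f :: 'b \<Rightarrow> 'a. inj_on f {..<x}"
    using assms(2) unfolding is_omega2_type_def by auto
  obtain T :: "'a \<Rightarrow> 'a set" where T1: "\<forall>\<alpha>. limit_pt \<alpha> \<longrightarrow> cofinal_in (T \<alpha>) \<alpha>"
    and T2: "\<forall>A. unbounded A \<longrightarrow> stationary {\<alpha>. limit_pt \<alpha> \<and> T \<alpha> \<subseteq> A}"
    using assms(3) unfolding clubsuit_def by blast
  have "infinite (UNIV::'a set)" using u countable_finite by blast
  then obtain p where "bij_betw p ((UNIV::'a set) \<times> (UNIV::'a set)) (UNIV::'a set)"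
    using card_of_ordIso card_of_Times_same_infinite by blast
  then have pinj: "inj p" by (simp add: bij_betw_def)
  define i :: "'b \<Rightarrow> 'b \<Rightarrow> 'a" where "i = (\<lambda>\<beta>. SOME f. inj_on f {..<\<beta>})"
  have iinj: "inj_on (i \<beta>) {..<\<beta>}" for \<beta>
    unfolding i_def using inj2 by (metis someI_ex)
  define e :: "'b \<Rightarrow> 'a \<Rightarrow> 'b" where "e = (\<lambda>\<beta>. inv_into {..<\<beta>} (i \<beta>))"
  have ei: "\<gamma> < \<beta> \<Longrightarrow> e \<beta> (i \<beta> \<gamma>) = \<gamma>" for \<gamma> \<beta>
    unfolding e_def using iinj by (simp add: inv_into_f_f)
  define R :: "('b \<times> 'b) set" where "R = {(x, y). x < y}"
  have wfR: "wf R" unfolding R_def by (rule wf)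
  define H :: "('b \<Rightarrow> 'a \<Rightarrow> 'a) \<Rightarrow> 'b \<Rightarrow> 'a \<Rightarrow> 'a" where
    "H = (\<lambda>g \<beta> \<xi>. LEAST v. v \<notin> (\<lambda>\<eta>. g (e \<beta> \<eta>) \<xi>) ` {\<eta>. \<eta> < \<xi> \<and> e \<beta> \<eta> < \<beta>})"
  define f where "f = wfrec R H"
  have fH: "f \<beta> \<xi> = (LEAST v. v \<notin> (\<lambda>\<eta>. f (e \<beta> \<eta>) \<xi>) ` {\<eta>. \<eta> < \<xi> \<and> e \<beta> \<eta> < \<beta>})"
    for \<beta> \<xi>
  proof -
    have "f \<beta> = H (cut f R \<beta>) \<beta>" unfolding f_def by (rule wfrec[OF wfR])
    then have "f \<beta> \<xi> = (LEAST v. v \<notin> (\<lambda>\<eta>. cut f R \<beta> (e \<beta> \<eta>) \<xi>) ` {\<eta>. \<eta> < \<xi> \<and> e \<beta> \<eta> < \<beta>})"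
      unfolding H_def by simp
    also have "(\<lambda>\<eta>. cut f R \<beta> (e \<beta> \<eta>) \<xi>) ` {\<eta>. \<eta> < \<xi> \<and> e \<beta> \<eta> < \<beta>} = (\<lambda>\<eta>. f (e \<beta> \<eta>) \<xi>) ` {\<eta>. \<eta> < \<xi> \<and> e \<beta> \<eta> < \<beta>}"
      by (auto simp: cut_def R_def)
    finally show ?thesis .
  qed
  have fdiff: "f \<beta> \<xi> \<noteq> f \<gamma> \<xi>" if "\<gamma> < \<beta>" "i \<beta> \<gamma> < \<xi>" for \<beta> \<gamma> \<xi>
  proof -
    let ?K = "(\<lambda>\<eta>. f (e \<beta> \<eta>) \<xi>) ` {\<eta>. \<eta> < \<xi> \<and> e \<beta> \<eta> < \<beta>}"
    have "countable ?K" using c countable_subset[of "{\<eta>. \<eta> < \<xi> \<and> e \<beta> \<eta> < \<beta>}" "{..<\<xi>}"] by auto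
    then obtain w where "w \<notin> ?K" using u by (metis UNIV_I subsetI countable_subset)
    then have "f \<beta> \<xi> \<notin> ?K" unfolding fH[of \<beta> \<xi>] by (rule LeastI)
    moreover have "f \<gamma> \<xi> \<in> ?K"
      using that ei[OF that(1)] by (intro image_eqI[of _ _ "i \<beta> \<gamma>"]) auto
    ultimately show ?thesis by metis
  qed
  define A where "A = (\<lambda>\<beta>. (\<lambda>\<xi>. p (\<xi>, f \<beta> \<xi>)) ` (UNIV::'a set))"
  have catm: "countable {..x}" for x :: 'a
  proof -
    have "{..x} = insert x {..<x}" by auto
    then show ?thesis using c by simp
  qed
  have Aunb: "unbounded (A \<beta>)" for \<beta>
  proof -
    have "inj (\<lambda>\<xi>. p (\<xi>, f \<beta> \<xi>))"
    proof (rule injI)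
      fix x y assume "p (x, f \<beta> x) = p (y, f \<beta> y)"
      then have "(x, f \<beta> x) = (y, f \<beta> y)" by (rule injD[OF pinj])
      then show "x = y" by simp
    qed
    then have "\<not> countable (A \<beta>)" unfolding A_def
      using u countable_image_inj_on[of "\<lambda>\<xi>. p (\<xi>, f \<beta> \<xi>)" "UNIV::'a set"] by blast
    then show ?thesis using uncountable_unbounded[OF c] by blast
  qed
  have Aint1: "countable (A \<beta> \<inter> A \<gamma>)" if "\<gamma> < \<beta>" for \<beta> \<gamma>
  proof -
    have "A \<beta> \<inter> A \<gamma> \<subseteq> (\<lambda>\<xi>. p (\<xi>, f \<beta> \<xi>)) ` {..i \<beta> \<gamma>}"
    proof
      fix z assume "z \<in> A \<beta> \<inter> A \<gamma>"
      then obtain \<xi> \<zeta> where z1: "z = p (\<xi>, f \<beta> \<xi>)" and z2: "z = p (\<zeta>, f \<gamma> \<zeta>)"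
        unfolding A_def by blast
      then have "p (\<xi>, f \<beta> \<xi>) = p (\<zeta>, f \<gamma> \<zeta>)" by simp
      then have "(\<xi>, f \<beta> \<xi>) = (\<zeta>, f \<gamma> \<zeta>)" by (rule injD[OF pinj])
      then have "\<xi> = \<zeta>" "f \<beta> \<xi> = f \<gamma> \<xi>" by auto
      then have "\<not> i \<beta> \<gamma> < \<xi>" using fdiff[OF that, of \<xi>] by blast
      then have "\<xi> \<le> i \<beta> \<gamma>" by (simp add: not_less)
      then show "z \<in> (\<lambda>\<xi>. p (\<xi>, f \<beta> \<xi>)) ` {..i \<beta> \<gamma>}" using z1 by auto
    qed
    then show ?thesis by (rule countable_subset[OF _ countable_image[OF catm]])
  qed
  have Aint: "countable (A \<beta> \<inter> A \<gamma>)" if "\<gamma> \<noteq> \<beta>" for \<beta> \<gamma>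
  proof (cases "\<gamma> < \<beta>")
    case True then show ?thesis by (rule Aint1)
  next
    case False then have "\<beta> < \<gamma>" using that by auto
    then have "countable (A \<gamma> \<inter> A \<beta>)" by (rule Aint1)
    then show ?thesis by (simp add: Int_commute)
  qed
  define S where "S = (\<lambda>\<beta>. {\<alpha>. limit_pt \<alpha> \<and> T \<alpha> \<subseteq> A \<beta>})"
  have Sstat: "stationary (S \<beta>)" for \<beta> unfolding S_def using T2 Aunb[of \<beta>] by simp
  have Sint: "countable (S \<beta> \<inter> S \<gamma>)" if ne: "\<gamma> \<noteq> \<beta>" for \<beta> \<gamma>
  proof -
    have ci: "countable (A \<beta> \<inter> A \<gamma>)" using Aint ne by blast
    obtain \<delta> where d: "\<forall>x\<in>A \<beta> \<inter> A \<gamma>. x < \<delta>" using ctbl_bounded[OF u c ci] by blast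
    have "S \<beta> \<inter> S \<gamma> \<subseteq> {..\<delta>}"
    proof
      fix \<alpha> assume "\<alpha> \<in> S \<beta> \<inter> S \<gamma>"
      then have l: "limit_pt \<alpha>" and sub: "T \<alpha> \<subseteq> A \<beta> \<inter> A \<gamma>" unfolding S_def by auto
      have cf: "cofinal_in (T \<alpha>) \<alpha>" using T1 l by blast
      show "\<alpha> \<in> {..\<delta>}"
      proof (rule ccontr)
        assume "\<alpha> \<notin> {..\<delta>}"
        then have "\<delta> < \<alpha>" by (simp add: not_le)
        then obtain t where "t \<in> T \<alpha>" "\<delta> \<le> t" using cf unfolding cofinal_in_def by blast
        then have "t \<in> A \<beta> \<inter> A \<gamma>" "\<delta> \<le> t" using sub by auto
        then show False using d by (auto simp: not_less[symmetric])
      qed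
    qed
    then show ?thesis by (rule countable_subset[OF _ catm])
  qed
  have n1: "\<forall>\<alpha>. S \<alpha> \<notin> (NS :: 'a set set)" unfolding NS_def using Sstat by simp
  have n2: "\<forall>\<alpha> \<beta>. \<alpha> \<noteq> \<beta> \<longrightarrow> S \<alpha> \<inter> S \<beta> \<in> (NS :: 'a set set)"
  proof (intro allI impI)
    fix \<alpha> \<beta> :: 'b assume ne: "\<alpha> \<noteq> \<beta>"
    have "countable (S \<alpha> \<inter> S \<beta>)" using Sint ne by metis
    then have "\<not> stationary (S \<alpha> \<inter> S \<beta>)" by (rule ctbl_nonstat[OF u c])
    then show "S \<alpha> \<inter> S \<beta> \<in> (NS :: 'a set set)" unfolding NS_def by simp
  qed
  have "\<not> saturated TYPE('b) (NS :: 'a set set)"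
    unfolding saturated_def using n1 n2 by blast
  moreover have "(\<forall>\<beta>. stationary (S \<beta>)) \<and> (\<forall>\<beta> \<gamma>. \<beta> \<noteq> \<gamma> \<longrightarrow> countable (S \<beta> \<inter> S \<gamma>))"
    using Sstat Sint by simp
  ultimately show ?thesis by blast
qed
end
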